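(* Let $d\ge1$, $\theta^*\in\mathbb{R}^d$, $\Sigma_x\in\mathbb{R}^{d\times d}$ positive definite, $\sigma_\epsilon>0$. Let $x\sim\mathcal{N}(0,\Sigma_x)$ and $y=\theta^{*\top}x+\epsilon$, where $\epsilon$ is independent of $x$ with $\mathbb{E}[\epsilon]=0$ and $\mathbb{E}[\epsilon^2]=\sigma_\epsilon^2$. For the squared loss $\ell(\theta;(x,y))=\frac12(y-\theta^\top x)^2$, let $\mu_g(\theta)$ and $\Sigma_g(\theta)$ be the mean and covariance of $\nabla_\theta\ell(\theta;(x,y))$. Let $(x^*,y^* )\in\mathbb{R}^d\times\mathbb{R}$ be a target point with residual $\epsilon^*=y^*-\theta^{*\top}x^*$, let $\delta_g=\nabla_\theta\ell(\theta^*;(x^*,y^* ))-\mu_g(\theta^* )$ and $m^*=\delta_g^\top\Sigma_g(\theta^* )^{-1}\delta_g$. Then \[ m^*=\frac{(\epsilon^* )^2}{\sigma_\epsilon^2}\,(x^* )^\top\Sigma_x^{-1}x^*. \] *)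

theory Defs
  imports "HOL-Probability.Probability"
begin

definition gradient :: "('v::real_inner \<Rightarrow> real) \<Rightarrow> 'v \<Rightarrow> 'v" where
  "gradient f \<theta> = (THE g. GDERIV f \<theta> :> g)"

definition sq_loss :: "real^'n \<Rightarrow> real^'n \<Rightarrow> real \<Rightarrow> real" where
  "sq_loss \<theta> x y = (y - \<theta> \<bullet> x)^2 / 2"

definition pos_def :: "real^'n^'n \<Rightarrow> bool" where
  "pos_def A \<longleftrightarrow> transpose A = A \<and> (\<forall>v. v \<noteq> 0 \<longrightarrow> v \<bullet> (A *v v) > 0)"

text \<open>Centered multivariate Gaussian N(0,S): every nontrivial linear functional
  a.X is (univariate) normal with mean 0 and variance a^T S a.\<close>
definition gaussian_vec :: "'a measure \<Rightarrow> ('a \<Rightarrow> real^'n) \<Rightarrow> real^'n^'n \<Rightarrow> bool" where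
  "gaussian_vec M X S \<longleftrightarrow> X \<in> borel_measurable M \<and>
     (\<forall>a. a \<noteq> 0 \<longrightarrow> distributed M lborel (\<lambda>\<omega>. a \<bullet> X \<omega>)
                          (\<lambda>t. ennreal (normal_density 0 (sqrt (a \<bullet> (S *v a))) t)))"

definition grad_mean :: "'a measure \<Rightarrow> ('a \<Rightarrow> real^'n) \<Rightarrow> ('a \<Rightarrow> real) \<Rightarrow> real^'n \<Rightarrow> real^'n" where
  "grad_mean M X Y \<theta> = (\<integral>\<omega>. gradient (\<lambda>t. sq_loss t (X \<omega>) (Y \<omega>)) \<theta> \<partial>M)"

definition grad_cov :: "'a measure \<Rightarrow> ('a \<Rightarrow> real^'n) \<Rightarrow> ('a \<Rightarrow> real) \<Rightarrow> real^'n \<Rightarrow> real^'n^'n" where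
  "grad_cov M X Y \<theta> = (\<chi> i j. \<integral>\<omega>.
      (gradient (\<lambda>t. sq_loss t (X \<omega>) (Y \<omega>)) \<theta> $ i - grad_mean M X Y \<theta> $ i) *
      (gradient (\<lambda>t. sq_loss t (X \<omega>) (Y \<omega>)) \<theta> $ j - grad_mean M X Y \<theta> $ j) \<partial>M)"

end

theory Submission
  imports Defs
begin

lemma gradient_sq_loss:
  fixes x \<theta> :: "real^'n"
  shows "gradient (\<lambda>t. sq_loss t x y) \<theta> = - ((y - \<theta> \<bullet> x) *\<^sub>R x)"
proof -
  have D: "GDERIV (\<lambda>t. sq_loss t x y) \<theta> :> - ((y - \<theta> \<bullet> x) *\<^sub>R x)"
  proof -
    have L: "((\<lambda>t. t \<bullet> x) has_derivative (\<lambda>h. h \<bullet> x)) (at \<theta>)"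
      by (rule bounded_linear_imp_has_derivative) (rule bounded_linear_inner_left)
    have e: "(\<lambda>t. sq_loss t x y) = (\<lambda>t. (1/2) * ((y - t \<bullet> x) * (y - t \<bullet> x)))"
      by (auto simp: sq_loss_def power2_eq_square)
    have D1: "((\<lambda>t. y - t \<bullet> x) has_derivative (\<lambda>h. 0 - h \<bullet> x)) (at \<theta>)"
      by (rule has_derivative_diff[OF has_derivative_const L])
    note D2 = has_derivative_mult[OF has_derivative_const[of "1/2"] has_derivative_mult[OF D1 D1]]
    show ?thesis unfolding gderiv_def e
      by (rule has_derivative_eq_rhs[OF D2]) (simp add: fun_eq_iff algebra_simps)
  qed
  have U: "g = - ((y - \<theta> \<bullet> x) *\<^sub>R x)" if "GDERIV (\<lambda>t. sq_loss t x y) \<theta> :> g" for g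
  proof -
    define d where "d = - ((y - \<theta> \<bullet> x) *\<^sub>R x)"
    have "(\<lambda>h. h \<bullet> g) = (\<lambda>h. h \<bullet> d)"
      using has_derivative_unique that D unfolding gderiv_def d_def by blast
    then have "(g - d) \<bullet> g = (g - d) \<bullet> d"
      by (rule fun_cong)
    then have "(g - d) \<bullet> (g - d) = 0"
      by (simp only: inner_diff_right right_minus_eq)
    then have "g - d = 0" by (simp only: inner_eq_zero_iff)
    then show ?thesis unfolding d_def[symmetric] by (simp only: right_minus_eq)
  qed
  show ?thesis unfolding gradient_def using D U by (rule the_equality)
qed

lemma indep_comp:
  assumes P: "prob_space M"
    and X: "X \<in> borel_measurable M" and E: "E \<in> borel_measurable M"
    and I: "prob_space.indep_set M
           {X -` A \<inter> space M | A. A \<in> sets (borel :: ('b::topological_space) measure)}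
           {E -` B \<inter> space M | B. B \<in> sets (borel :: ('c::topological_space) measure)}"
    and f: "f \<in> borel_measurable borel" and g: "g \<in> borel_measurable borel"
  shows "prob_space.indep_var M borel (\<lambda>\<omega>. (f (X \<omega>) :: real)) borel (\<lambda>\<omega>. (g (E \<omega>) :: real))"
proof -
  interpret prob_space M by fact
  have m1: "(\<lambda>\<omega>. f (X \<omega>)) \<in> borel_measurable M" using X f by measurable
  have m2: "(\<lambda>\<omega>. g (E \<omega>)) \<in> borel_measurable M" using E g by measurable
  show ?thesis
    unfolding indep_var_def indep_vars_def2
  proof (intro conjI)
    show "\<forall>i\<in>UNIV. random_variable (case_bool borel borel i) (case_bool (\<lambda>\<omega>. f (X \<omega>)) (\<lambda>\<omega>. g (E \<omega>)) i)"
      using m1 m2 by (auto split: bool.split)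
    show "indep_sets (\<lambda>i. {case_bool (\<lambda>\<omega>. f (X \<omega>)) (\<lambda>\<omega>. g (E \<omega>)) i -` A \<inter> space M |A.
        A \<in> sets (case_bool borel borel i)}) UNIV"
    proof (rule indep_sets_mono_sets[OF I[unfolded indep_set_def]])
      fix i :: bool
      show "{case_bool (\<lambda>\<omega>. f (X \<omega>)) (\<lambda>\<omega>. g (E \<omega>)) i -` A \<inter> space M |A.
        A \<in> sets (case_bool borel borel i)} \<subseteq> case_bool {X -` A \<inter> space M |A. A \<in> sets borel}
          {E -` B \<inter> space M |B. B \<in> sets borel} i"
      proof (cases i)
        case True
        show ?thesis using True
        proof (clarsimp)
          fix A :: "real set" assume "A \<in> sets borel"
          then have "f -` A \<in> sets borel" using f by (metis measurable_sets space_borel vimage_Int Int_UNIV_right inf_top.right_neutral)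
          then show "\<exists>B. (\<lambda>\<omega>. f (X \<omega>)) -` A \<inter> space M = X -` B \<inter> space M \<and> B \<in> sets borel"
            by (intro exI[of _ "f -` A"]) auto
        qed
      next
        case False
        show ?thesis using False
        proof (clarsimp)
          fix A :: "real set" assume "A \<in> sets borel"
          then have "g -` A \<in> sets borel" using g by (metis measurable_sets space_borel vimage_Int Int_UNIV_right inf_top.right_neutral)
          then show "\<exists>B. (\<lambda>\<omega>. g (E \<omega>)) -` A \<inter> space M = E -` B \<inter> space M \<and> B \<in> sets borel"
            by (intro exI[of _ "g -` A"]) auto
        qed
      qed
    qed
  qed
qed
lemma gauss_moments:
  fixes X :: "'a \<Rightarrow> real^'n"
  assumes P: "prob_space M" and S: "pos_def S" and G: "gaussian_vec M X S" and a: "a \<noteq> 0"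
  shows "integrable M (\<lambda>\<omega>. a \<bullet> X \<omega>)" "(\<integral>\<omega>. a \<bullet> X \<omega> \<partial>M) = 0"
    "integrable M (\<lambda>\<omega>. (a \<bullet> X \<omega>)^2)" "(\<integral>\<omega>. (a \<bullet> X \<omega>)^2 \<partial>M) = a \<bullet> (S *v a)"
proof -
  interpret prob_space M by fact
  define s where "s = sqrt (a \<bullet> (S *v a))"
  have pos: "a \<bullet> (S *v a) > 0" using S a unfolding pos_def_def by auto
  then have s0: "s > 0" unfolding s_def by simp
  have D: "distributed M lborel (\<lambda>\<omega>. a \<bullet> X \<omega>) (\<lambda>t. ennreal (normal_density 0 s t))"
    using G a unfolding gaussian_vec_def s_def by auto
  show i1: "integrable M (\<lambda>\<omega>. a \<bullet> X \<omega>)"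
    using distributed_integrable[OF D, of "\<lambda>x. x"] integrable_normal_moment_nz_1[OF s0, of 0] by simp
  show e1: "(\<integral>\<omega>. a \<bullet> X \<omega> \<partial>M) = 0"
    using normal_distributed_expectation[OF s0 D] by simp
  have "integrable lborel (\<lambda>x. normal_density 0 s x * x^2)"
    using integrable_normal_moment[OF s0, of 0 2] by simp
  then show "integrable M (\<lambda>\<omega>. (a \<bullet> X \<omega>)^2)"
    using distributed_integrable[OF D, of "\<lambda>x. x^2"] by simp
  have "variance (\<lambda>\<omega>. a \<bullet> X \<omega>) = s^2"
    using normal_distributed_variance[OF s0 D] by simp
  then show "(\<integral>\<omega>. (a \<bullet> X \<omega>)^2 \<partial>M) = a \<bullet> (S *v a)"
    using e1 pos unfolding s_def by simp
qed

theorem theoremF10: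
  fixes M :: "'a measure"
    and X :: "'a \<Rightarrow> real^'n" and eps :: "'a \<Rightarrow> real"
    and \<theta>s :: "real^'n" and \<Sigma>x :: "real^'n^'n" and \<sigma> :: real
    and xs :: "real^'n" and ys :: real
  assumes "prob_space M"
    and "pos_def \<Sigma>x"
    and "\<sigma> > 0"
    and "gaussian_vec M X \<Sigma>x"
    and "eps \<in> borel_measurable M"
    and "prob_space.indep_set M
           {X -` A \<inter> space M | A. A \<in> sets (borel :: (real^'n) measure)}
           {eps -` B \<inter> space M | B. B \<in> sets (borel :: real measure)}"
    and "integrable M (\<lambda>\<omega>. (eps \<omega>)^2)"
    and "(\<integral>\<omega>. eps \<omega> \<partial>M) = 0"
    and "(\<integral>\<omega>. (eps \<omega>)^2 \<partial>M) = \<sigma>^2"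
  shows
    "let Y = (\<lambda>\<omega>. \<theta>s \<bullet> X \<omega> + eps \<omega>);
         es = ys - \<theta>s \<bullet> xs;
         \<delta> = gradient (\<lambda>t. sq_loss t xs ys) \<theta>s - grad_mean M X Y \<theta>s;
         m = \<delta> \<bullet> (matrix_inv (grad_cov M X Y \<theta>s) *v \<delta>)
     in m = es^2 / \<sigma>^2 * (xs \<bullet> (matrix_inv \<Sigma>x *v xs))"
  proof -
  interpret prob_space M by fact
  note S = assms(2) and Gs = assms(4)
  have Xm[measurable]: "X \<in> borel_measurable M" using Gs unfolding gaussian_vec_def by simp
  have em[measurable]: "eps \<in> borel_measurable M" by fact
  have eps_int: "integrable M eps"
    by (rule square_integrable_imp_integrable[OF assms(5) assms(7)])
  have ax: "axis i (1::real) \<noteq> 0" for i :: 'n by simp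
  have compX: "(\<lambda>\<omega>. X \<omega> $ i) = (\<lambda>\<omega>. axis i 1 \<bullet> X \<omega>)" for i
    by (simp add: inner_axis')
  have Xi_int: "integrable M (\<lambda>\<omega>. X \<omega> $ i)" for i
    unfolding compX using gauss_moments(1)[OF assms(1) S Gs ax] .
  have Xi_mean: "(\<integral>\<omega>. X \<omega> $ i \<partial>M) = 0" for i
    unfolding compX using gauss_moments(2)[OF assms(1) S Gs ax] .
  have Sij: "axis i 1 \<bullet> (\<Sigma>x *v axis j 1) = \<Sigma>x $ i $ j" for i j
    by (simp add: matrix_vector_mult_basis inner_axis' column_def)
  have Ssym: "\<Sigma>x $ j $ i = \<Sigma>x $ i $ j" for i j
  proof -
    have "transpose \<Sigma>x = \<Sigma>x" using S unfolding pos_def_def by simp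
    then have "transpose \<Sigma>x $ i $ j = \<Sigma>x $ i $ j" by simp
    then show ?thesis by (simp add: transpose_def)
  qed
  have sq: "integrable M (\<lambda>\<omega>. (axis i 1 \<bullet> X \<omega>)^2)" "(\<integral>\<omega>. (axis i 1 \<bullet> X \<omega>)^2 \<partial>M) = \<Sigma>x $ i $ i" for i
    using gauss_moments(3,4)[OF assms(1) S Gs ax[of i]] Sij[of i i] by simp_all
  have prod: "integrable M (\<lambda>\<omega>. X \<omega> $ i * X \<omega> $ j) \<and> (\<integral>\<omega>. X \<omega> $ i * X \<omega> $ j \<partial>M) = \<Sigma>x $ i $ j" for i j
  proof -
    define a where "a = axis i (1::real) + axis j 1"
    have "a $ i \<noteq> 0" by (simp add: a_def axis_def)
    then have a0: "a \<noteq> 0" by auto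
    have aS: "a \<bullet> (\<Sigma>x *v a) = \<Sigma>x $ i $ i + 2 * \<Sigma>x $ i $ j + \<Sigma>x $ j $ j"
      unfolding a_def using Sij Ssym[of i j]
      by (simp add: matrix_vector_right_distrib inner_add_left inner_add_right)
    have eq: "(\<lambda>\<omega>. X \<omega> $ i * X \<omega> $ j) =
      (\<lambda>\<omega>. ((a \<bullet> X \<omega>)^2 - (axis i 1 \<bullet> X \<omega>)^2 - (axis j 1 \<bullet> X \<omega>)^2) / 2)"
      by (simp add: fun_eq_iff a_def inner_add_left inner_axis' power2_eq_square algebra_simps)
    note ga = gauss_moments(3,4)[OF assms(1) S Gs a0]
    have I: "integrable M (\<lambda>\<omega>. X \<omega> $ i * X \<omega> $ j)"
      unfolding eq using ga sq by (intro integrable_divide integrable_diff) auto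
    have "(\<integral>\<omega>. X \<omega> $ i * X \<omega> $ j \<partial>M) = ((a \<bullet> (\<Sigma>x *v a)) - \<Sigma>x $ i $ i - \<Sigma>x $ j $ j) / 2"
      unfolding eq using ga sq by (simp add: integral_diff)
    then show ?thesis using I aS by simp
  qed
  have G: "gradient (\<lambda>t. sq_loss t (X \<omega>) (\<theta>s \<bullet> X \<omega> + eps \<omega>)) \<theta>s = - (eps \<omega> *\<^sub>R X \<omega>)" for \<omega>
    by (simp add: gradient_sq_loss)
  have nth_meas: "(\<lambda>x::real^'n. x $ i) \<in> borel_measurable borel" for i by measurable
  have ind1: "indep_var borel (\<lambda>\<omega>. X \<omega> $ i) borel (\<lambda>\<omega>. eps \<omega>)" for i
    using indep_comp[OF assms(1) Xm em assms(6), of "\<lambda>x. x $ i" "\<lambda>e. e"] nth_meas by simp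
  have ind2: "indep_var borel (\<lambda>\<omega>. X \<omega> $ i * X \<omega> $ j) borel (\<lambda>\<omega>. (eps \<omega>)^2)" for i j
    using indep_comp[OF assms(1) Xm em assms(6), of "\<lambda>x. x $ i * x $ j" "\<lambda>e. e^2"] by simp
  have gm: "grad_mean M X (\<lambda>\<omega>. \<theta>s \<bullet> X \<omega> + eps \<omega>) \<theta>s = 0"
    unfolding grad_mean_def G
  proof (cases "integrable M (\<lambda>\<omega>. - (eps \<omega> *\<^sub>R X \<omega>))")
    case True
    show "(\<integral>\<omega>. - (eps \<omega> *\<^sub>R X \<omega>) \<partial>M) = 0"
    proof (subst vec_eq_iff, intro allI)
      fix i
      have "(\<integral>\<omega>. - (eps \<omega> *\<^sub>R X \<omega>) \<partial>M) $ i = (\<integral>\<omega>. (- (eps \<omega> *\<^sub>R X \<omega>)) $ i \<partial>M)"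
        by (rule integral_bounded_linear[OF bounded_linear_vec_nth True, symmetric])
      also have "\<dots> = - (\<integral>\<omega>. X \<omega> $ i * eps \<omega> \<partial>M)"
        by (simp add: mult.commute)
      also have "\<dots> = 0"
        using indep_var_lebesgue_integral[OF ind1 Xi_int eps_int] Xi_mean by simp
      finally show "(\<integral>\<omega>. - (eps \<omega> *\<^sub>R X \<omega>) \<partial>M) $ i = 0 $ i" by simp
    qed
  next
    case False
    then show "(\<integral>\<omega>. - (eps \<omega> *\<^sub>R X \<omega>) \<partial>M) = 0" by (rule not_integrable_integral_eq)
  qed
  have gc: "grad_cov M X (\<lambda>\<omega>. \<theta>s \<bullet> X \<omega> + eps \<omega>) \<theta>s = \<sigma>^2 *\<^sub>R \<Sigma>x"
  proof -
    have cij: "(\<integral>\<omega>. ((- (eps \<omega> *\<^sub>R X \<omega>)) $ i - 0 $ i) * ((- (eps \<omega> *\<^sub>R X \<omega>)) $ j - 0 $ j) \<partial>M)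
        = (\<sigma>^2 *\<^sub>R \<Sigma>x) $ i $ j" for i j
    proof -
      have "(\<integral>\<omega>. ((- (eps \<omega> *\<^sub>R X \<omega>)) $ i - 0 $ i) * ((- (eps \<omega> *\<^sub>R X \<omega>)) $ j - 0 $ j) \<partial>M)
          = (\<integral>\<omega>. (X \<omega> $ i * X \<omega> $ j) * (eps \<omega>)^2 \<partial>M)"
        by (simp add: power2_eq_square algebra_simps)
      also have "\<dots> = \<Sigma>x $ i $ j * \<sigma>^2"
        using indep_var_lebesgue_integral[OF ind2 conjunct1[OF prod] assms(7)] conjunct2[OF prod] assms(9)
        by simp
      finally show ?thesis by simp
    qed
    show ?thesis
      unfolding grad_cov_def gm G
      by (intro vec_eq_iff[THEN iffD2] allI) (simp only: vec_lambda_beta cij)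
  qed
  have inv: "invertible \<Sigma>x"
    unfolding invertible_left_inverse matrix_left_invertible_ker
  proof (intro allI impI)
    fix v assume "\<Sigma>x *v v = 0"
    then show "v = 0" using S unfolding pos_def_def by force
  qed
  define B where "B = matrix_inv \<Sigma>x"
  have B: "\<Sigma>x ** B = mat 1 \<and> B ** \<Sigma>x = mat 1"
    unfolding B_def matrix_inv_def by (rule someI_ex) (use inv in \<open>simp add: invertible_def\<close>)
  have s0: "\<sigma>^2 \<noteq> 0" using assms(3) by simp
  have minv: "matrix_inv (\<sigma>^2 *\<^sub>R \<Sigma>x) = (1 / \<sigma>^2) *\<^sub>R B"
    unfolding matrix_inv_def
  proof (rule some_equality)
    show "\<sigma>^2 *\<^sub>R \<Sigma>x ** ((1 / \<sigma>^2) *\<^sub>R B) = mat 1 \<and> (1 / \<sigma>^2) *\<^sub>R B ** (\<sigma>^2 *\<^sub>R \<Sigma>x) = mat 1"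
      using B s0 by (simp add: matrix_scalar_ac scalar_matrix_assoc[symmetric])
  next
    fix A' assume A': "\<sigma>^2 *\<^sub>R \<Sigma>x ** A' = mat 1 \<and> A' ** (\<sigma>^2 *\<^sub>R \<Sigma>x) = mat 1"
    have "A' = A' ** (\<sigma>^2 *\<^sub>R \<Sigma>x ** ((1 / \<sigma>^2) *\<^sub>R B))"
      using B s0 by (simp add: matrix_scalar_ac scalar_matrix_assoc[symmetric])
    also have "\<dots> = (A' ** (\<sigma>^2 *\<^sub>R \<Sigma>x)) ** ((1 / \<sigma>^2) *\<^sub>R B)"
      by (rule matrix_mul_assoc)
    also have "\<dots> = (1 / \<sigma>^2) *\<^sub>R B" using A' by simp
    finally show "A' = (1 / \<sigma>^2) *\<^sub>R B" .
  qed
  have d: "gradient (\<lambda>t. sq_loss t xs ys) \<theta>s = (- (ys - \<theta>s \<bullet> xs)) *\<^sub>R xs"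
    by (simp only: gradient_sq_loss scaleR_minus_left)
  show ?thesis
    unfolding Let_def gm gc minv d B_def[symmetric]
    by (simp add: scaleR_matrix_vector_assoc[symmetric] matrix_vector_mult_scaleR power2_eq_square) (intro disjI2, simp add: algebra_simps)
qed

end
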